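(* Let $G$ be a compact group with Haar probability measure $dg$, acting linearly and continuously on a finite-dimensional real vector space $V$. Fix $v\in V$ and a linear function $\ell:V\to\mathbb{R}$, and let $f(g)=\ell(gv)$. For a positive integer $k$, let $$D_k=\dim \operatorname{span}\{g v^{\otimes k}: g\in G\}$$ be the dimension of the linear span of the orbit of $v^{\otimes k}$ in $V^{\otimes k}$. Then $$\|f\|_{2k}\le \|f\|_\infty\le D_k^{1/(2k)}\,\|f\|_{2k}.$$
   Context: $V^{\otimes k}$ is the $k$-th tensor power of $V$, with $G$ acting diagonally: $g(v_1\otimes\cdots\otimes v_k)=gv_1\otimes\cdots\otimes gv_k$; $v^{\otimes k}=v\otimes\cdots\otimes v$ ($k$ factors). For $f:G\to\mathbb{R}$, $\|f\|_\infty=\max_{g\in G}|f(g)|$ and $\|f\|_{2k}=\left(\int_G f^{2k}(g)\,dg\right)^{1/(2k)}$. *)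

theory Defs
  imports "HOL-Analysis.Analysis" "HOL-Probability.Probability" "HOL-Algebra.Group"
begin

definition compact_group :: "('g::topological_space, 'b) monoid_scheme \<Rightarrow> bool" where
  "compact_group G \<longleftrightarrow> group G \<and> compact (carrier G) \<and>
     continuous_on (carrier G \<times> carrier G) (\<lambda>(x, y). x \<otimes>\<^bsub>G\<^esub> y) \<and>
     continuous_on (carrier G) (\<lambda>x. inv\<^bsub>G\<^esub> x)"

definition haar_prob :: "('g::topological_space, 'b) monoid_scheme \<Rightarrow> 'g measure \<Rightarrow> bool" where
  "haar_prob G \<mu> \<longleftrightarrow> prob_space \<mu> \<and> space \<mu> = carrier G \<and>
     sets \<mu> = sets (restrict_space borel (carrier G)) \<and>
     (\<forall>g\<in>carrier G. \<forall>A\<in>sets \<mu>.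
        emeasure \<mu> ((\<lambda>h. g \<otimes>\<^bsub>G\<^esub> h) ` A) = emeasure \<mu> A \<and>
        emeasure \<mu> ((\<lambda>h. h \<otimes>\<^bsub>G\<^esub> g) ` A) = emeasure \<mu> A)"

definition continuous_linear_action ::
  "('g::topological_space, 'b) monoid_scheme \<Rightarrow> ('g \<Rightarrow> real^'n^'n) \<Rightarrow> bool" where
  "continuous_linear_action G \<rho> \<longleftrightarrow>
     \<rho> \<one>\<^bsub>G\<^esub> = mat 1 \<and>
     (\<forall>g\<in>carrier G. \<forall>h\<in>carrier G. \<rho> (g \<otimes>\<^bsub>G\<^esub> h) = \<rho> g ** \<rho> h) \<and>
     continuous_on (carrier G) \<rho>"

text \<open>k-th tensor power of R^n, realised as R^('n^'k) with k = CARD('k):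
  coordinates indexed by k-tuples of basis indices.\<close>
definition tensor_pow :: "real^'n \<Rightarrow> real^('n^'k)" where
  "tensor_pow x = (\<chi> \<sigma>. \<Prod>j\<in>UNIV. x $ (\<sigma> $ j))"

definition tensor_act :: "real^'n^'n \<Rightarrow> real^('n^'k) \<Rightarrow> real^('n^'k)" where
  "tensor_act A T = (\<chi> \<sigma>. \<Sum>\<tau>\<in>UNIV. (\<Prod>j\<in>UNIV. A $ (\<sigma> $ j) $ (\<tau> $ j)) * T $ \<tau>)"

definition sup_norm :: "('g, 'b) monoid_scheme \<Rightarrow> ('g \<Rightarrow> real) \<Rightarrow> real" where
  "sup_norm G f = (SUP g\<in>carrier G. \<bar>f g\<bar>)"

definition Lp_norm_even :: "'g measure \<Rightarrow> nat \<Rightarrow> ('g \<Rightarrow> real) \<Rightarrow> real" where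
  "Lp_norm_even \<mu> p f = (\<integral>g. (f g) ^ p \<partial>\<mu>) powr (1 / real p)"

end

theory Submission
  imports Defs "HOL-Library.FuncSet"
begin


lemma sum_vec_prod:
  fixes a :: "'k::finite \<Rightarrow> 'n::finite \<Rightarrow> real"
  shows "(\<Sum>\<tau>\<in>(UNIV::('n^'k) set). \<Prod>j\<in>UNIV. a j (\<tau> $ j)) = (\<Prod>j\<in>UNIV. \<Sum>t\<in>UNIV. a j t)"
proof -
  have "(\<Prod>j\<in>UNIV. \<Sum>t\<in>UNIV. a j t) = (\<Sum>g\<in>PiE UNIV (\<lambda>_. UNIV). \<Prod>j\<in>UNIV. a j (g j))"
    by (rule prod_sum_PiE) auto
  also have "PiE UNIV (\<lambda>_. UNIV) = (UNIV :: ('k \<Rightarrow> 'n) set)" by auto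
  also have "(\<Sum>g\<in>UNIV. \<Prod>j\<in>UNIV. a j (g j)) = (\<Sum>\<tau>\<in>(UNIV::('n^'k) set). \<Prod>j\<in>UNIV. a j (\<tau> $ j))"
  proof -
    have b: "bij_betw vec_lambda (UNIV :: ('k \<Rightarrow> 'n) set) (UNIV::('n^'k) set)"
      by (auto intro!: bij_betwI[of _ _ _ vec_nth] simp: vec_eq_iff)
    show ?thesis using sum.reindex_bij_betw[OF b, of "\<lambda>\<tau>. \<Prod>j\<in>UNIV. a j (\<tau> $ j)"] by simp
  qed
  finally show ?thesis ..
qed

lemma tensor_act_pow:
  fixes A :: "real^'n^'n"
  shows "tensor_act A (tensor_pow x :: real^('n^'k)) = tensor_pow (A *v x)"
proof -
  have "tensor_act A (tensor_pow x :: real^('n^'k)) $ \<sigma> = tensor_pow (A *v x) $ \<sigma>" for \<sigma> :: "'n^'k"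
    unfolding tensor_act_def tensor_pow_def matrix_vector_mult_def
    using sum_vec_prod[of "\<lambda>j t. A $ (\<sigma> $ j) $ t * x $ t"]
    by (simp add: prod.distrib[symmetric])
  then show ?thesis by (simp add: vec_eq_iff)
qed

lemma tensor_act_mult:
  fixes A B :: "real^'n^'n" and T :: "real^('n^'k)"
  shows "tensor_act A (tensor_act B T) = tensor_act (A ** B) T"
proof -
  have "tensor_act A (tensor_act B T) $ \<sigma> = tensor_act (A ** B) T $ \<sigma>" for \<sigma> :: "'n^'k"
  proof -
    have "tensor_act A (tensor_act B T) $ \<sigma> =
      (\<Sum>\<tau>\<in>UNIV. \<Sum>\<upsilon>\<in>UNIV. (\<Prod>j\<in>UNIV. A $ (\<sigma> $ j) $ (\<tau> $ j)) * (\<Prod>j\<in>UNIV. B $ (\<tau> $ j) $ (\<upsilon> $ j)) * T $ \<upsilon>)"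
      unfolding tensor_act_def by (simp add: sum_distrib_left mult.assoc)
    also have "\<dots> = (\<Sum>\<upsilon>\<in>UNIV. (\<Sum>\<tau>\<in>UNIV. \<Prod>j\<in>UNIV. A $ (\<sigma> $ j) $ (\<tau> $ j) * B $ (\<tau> $ j) $ (\<upsilon> $ j)) * T $ \<upsilon>)"
      by (subst sum.swap) (simp add: sum_distrib_right prod.distrib)
    also have "\<dots> = tensor_act (A ** B) T $ \<sigma>"
      unfolding tensor_act_def matrix_matrix_mult_def
      by (simp add: sum_vec_prod[where a = "\<lambda>j t. A $ (\<sigma> $ j) $ t * B $ t $ (_ $ j)"])
    finally show ?thesis .
  qed
  then show ?thesis by (simp add: vec_eq_iff)
qed

lemma tensor_act_linear: "linear (tensor_act A)"
  unfolding tensor_act_def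
  by (intro linearI) (auto simp: vec_eq_iff sum.distrib algebra_simps sum_distrib_left)



lemma core:
  fixes \<mu> :: "'g measure" and \<phi> :: "'v::euclidean_space \<Rightarrow> 'g \<Rightarrow> real" and W :: "'v set"
    and Tm :: "'g \<Rightarrow> 'v \<Rightarrow> 'v" and mult :: "'g \<Rightarrow> 'g \<Rightarrow> 'g"
  assumes P: "prob_space \<mu>" and sp: "space \<mu> = C"
  and int: "\<And>u w. integrable \<mu> (\<lambda>g. \<phi> u g * \<phi> w g)"
  and lin: "\<And>g. linear (\<lambda>w. \<phi> w g)"
  and fs: "\<And>w x. w \<in> W \<Longrightarrow> (\<integral>g. \<phi> w g * \<phi> w g \<partial>\<mu>) = 0 \<Longrightarrow> x \<in> C \<Longrightarrow> \<phi> w x = 0"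
  and sub: "subspace W"
  and Tw: "\<And>y w. y \<in> C \<Longrightarrow> w \<in> W \<Longrightarrow> Tm y w \<in> W"
  and Tphi: "\<And>y w g. y \<in> C \<Longrightarrow> g \<in> C \<Longrightarrow> \<phi> (Tm y w) g = \<phi> w (mult g y)"
  and inv: "\<And>y w. y \<in> C \<Longrightarrow> (\<integral>g. \<phi> w (mult g y) * \<phi> w (mult g y) \<partial>\<mu>) = (\<integral>g. \<phi> w g * \<phi> w g \<partial>\<mu>)"
  and mc: "\<And>x y. x \<in> C \<Longrightarrow> y \<in> C \<Longrightarrow> mult x y \<in> C"
  and solv: "\<And>x. x \<in> C \<Longrightarrow> \<exists>y\<in>C. mult x y = x0" and x0: "x0 \<in> C"
  and w: "w \<in> W"
  shows "(\<phi> w x0)^2 \<le> dim W * (\<integral>g. \<phi> w g * \<phi> w g \<partial>\<mu>)"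
proof -
  interpret prob_space \<mu> by (rule P)
  define Q where "Q u w = (\<integral>g. \<phi> u g * \<phi> w g \<partial>\<mu>)" for u w
  have phisum: "\<phi> (\<Sum>e\<in>E. c e *\<^sub>R e) g = (\<Sum>e\<in>E. c e * \<phi> e g)" for E c g
    using linear_sum[OF lin[of g], of "\<lambda>e. c e *\<^sub>R e" E] linear_scale[OF lin[of g]] by simp
  have phidiff: "\<phi> (u - v) g = \<phi> u g - \<phi> v g" for u v g
    using linear_diff[OF lin[of g]] by simp
  have phiscale: "\<phi> (c *\<^sub>R u) g = c * \<phi> u g" for c u g
    using linear_scale[OF lin[of g]] by simp
  have Qsym: "Q u v = Q v u" for u v unfolding Q_def by (simp add: mult.commute)
  have Qnn: "Q u u \<ge> 0" for u unfolding Q_def by simp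
  have Qsum: "Q (\<Sum>e\<in>E. c e *\<^sub>R e) w = (\<Sum>e\<in>E. c e * Q e w)" if "finite E" for E c w
  proof -
    have "Q (\<Sum>e\<in>E. c e *\<^sub>R e) w = (\<integral>g. (\<Sum>e\<in>E. c e * (\<phi> e g * \<phi> w g)) \<partial>\<mu>)"
      unfolding Q_def phisum by (simp add: sum_distrib_right mult.assoc)
    also have "\<dots> = (\<Sum>e\<in>E. c e * Q e w)"
      unfolding Q_def using int by (subst Bochner_Integration.integral_sum) auto
    finally show ?thesis .
  qed
  have Qdiff: "Q (u - v) w = Q u w - Q v w" for u v w
    unfolding Q_def phidiff using int by (simp add: left_diff_distrib)
  have Qscale: "Q (c *\<^sub>R u) w = c * Q u w" for c u w
    unfolding Q_def phiscale by (simp add: mult.assoc)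
  define ON where "ON E \<longleftrightarrow> finite E \<and> E \<subseteq> W \<and> (\<forall>e\<in>E. \<forall>e'\<in>E. Q e e' = (if e = e' then 1 else 0))" for E
  have ON_card: "card E \<le> dim W" if "ON E" for E
  proof -
    have fE: "finite E" and EW: "E \<subseteq> W" and oE: "\<And>e e'. e \<in> E \<Longrightarrow> e' \<in> E \<Longrightarrow> Q e e' = (if e = e' then 1 else 0)"
      using that unfolding ON_def by simp_all
    have "independent E"
    proof
      assume "dependent E"
      then have "\<exists>u. (\<exists>v\<in>E. u v \<noteq> 0) \<and> (\<Sum>v\<in>E. u v *\<^sub>R v) = 0"
        using dependent_finite[OF fE] by simp
      then obtain u v where v: "v \<in> E" "u v \<noteq> 0" and s: "(\<Sum>v\<in>E. u v *\<^sub>R v) = 0"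
        by blast
      have "0 = Q (\<Sum>v\<in>E. u v *\<^sub>R v) v" using s by (simp add: Q_def linear_0[OF lin])
      also have "\<dots> = (\<Sum>e\<in>E. u e * Q e v)" by (rule Qsum[OF fE])
      also have "\<dots> = (\<Sum>e\<in>E. if e = v then u e else 0)"
        using oE[OF _ v(1)] by (intro sum.cong) simp_all
      also have "\<dots> = u v" using v fE by simp
      finally show False using v by simp
    qed
    then show ?thesis using independent_card_le_dim[OF EW] by simp
  qed
  obtain E where E: "ON E" and Emax: "\<And>E'. ON E' \<Longrightarrow> card E' \<le> card E"
  proof -
    have "ON {}" unfolding ON_def by simp
    moreover have "\<forall>E. ON E \<longrightarrow> card E < dim W + 1" using ON_card by (simp add: less_Suc_eq_le)
    ultimately have "\<exists>x. ON x \<and> (\<forall>y. ON y \<longrightarrow> card y \<le> card x)"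
      by (rule Lattices_Big.ex_has_greatest_nat)
    then obtain E0 where "ON E0" "\<forall>y. ON y \<longrightarrow> card y \<le> card E0" by blast
    then show ?thesis using that by simp
  qed
  have Efin: "finite E" and EW: "E \<subseteq> W" and Eon: "\<And>e e'. e \<in> E \<Longrightarrow> e' \<in> E \<Longrightarrow> Q e e' = (if e = e' then 1 else 0)"
    using E unfolding ON_def by simp_all
  have expand: "\<phi> u x = (\<Sum>e\<in>E. Q u e * \<phi> e x)" if u: "u \<in> W" and x: "x \<in> C" for u x
  proof -
    define n where "n = u - (\<Sum>e\<in>E. Q u e *\<^sub>R e)"
    have nW: "n \<in> W" unfolding n_def using sub u EW
      by (intro subspace_diff subspace_sum subspace_scale) (use sub u EW in auto)
    have Qn: "Q n e' = 0" if "e' \<in> E" for e'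
    proof -
      have "Q n e' = Q u e' - (\<Sum>e\<in>E. Q u e * Q e e')" unfolding n_def Qdiff Qsum[OF Efin] ..
      also have "(\<Sum>e\<in>E. Q u e * Q e e') = (\<Sum>e\<in>E. if e = e' then Q u e else 0)"
        using that Eon by (intro sum.cong) auto
      also have "\<dots> = Q u e'" using that Efin by simp
      finally show ?thesis by simp
    qed
    have "Q n n = 0"
    proof (rule ccontr)
      assume "Q n n \<noteq> 0"
      then have pos: "Q n n > 0" using Qnn[of n] by simp
      define e0 where "e0 = (1 / sqrt (Q n n)) *\<^sub>R n"
      have "Q e0 e0 = (1 / sqrt (Q n n)) * Q e0 n" unfolding e0_def
        by (subst Qsym) (simp only: Qscale)
      also have "Q e0 n = (1 / sqrt (Q n n)) * Q n n" unfolding e0_def by (simp only: Qscale)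
      finally have "Q e0 e0 = Q n n / (sqrt (Q n n) * sqrt (Q n n))" by simp
      also have "sqrt (Q n n) * sqrt (Q n n) = Q n n" using pos by simp
      finally have Qe0: "Q e0 e0 = 1" using pos by simp
      have Qe0e: "Q e0 e = 0" if "e \<in> E" for e unfolding e0_def Qscale using Qn[OF that] by simp
      have e0E: "e0 \<notin> E" using Qe0 Qe0e by force
      have "ON (insert e0 E)" unfolding ON_def
      proof (intro conjI ballI)
        show "finite (insert e0 E)" using Efin by simp
        show "insert e0 E \<subseteq> W" using EW nW sub unfolding e0_def by (auto intro: subspace_scale)
        fix a b assume "a \<in> insert e0 E" "b \<in> insert e0 E"
        show "Q a b = (if a = b then 1 else 0)"
        proof (cases "a = e0")
          case True
          then show ?thesis using Qe0 Qe0e e0E \<open>b \<in> insert e0 E\<close> by auto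
        next
          case False
          then have a: "a \<in> E" using \<open>a \<in> insert e0 E\<close> by simp
          show ?thesis
          proof (cases "b = e0")
            case True
            then show ?thesis using Qe0e[OF a] Qsym[of a e0] a e0E by auto
          next
            case False
            then show ?thesis using Eon[OF a] \<open>b \<in> insert e0 E\<close> by simp
          qed
        qed
      qed
      then have "card (insert e0 E) \<le> card E" by (rule Emax)
      then show False using e0E Efin by simp
    qed
    then have "\<phi> n x = 0" using fs[OF nW _ x] unfolding Q_def by simp
    then show ?thesis unfolding n_def phidiff phisum by simp
  qed
  have Qww: "Q u u = (\<Sum>e\<in>E. (Q u e)^2)" if u: "u \<in> W" for u
  proof -
    have "Q u u = (\<integral>g. \<phi> u g * (\<Sum>e\<in>E. Q u e * \<phi> e g) \<partial>\<mu>)"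
      unfolding Q_def[of u u] using expand[OF u] sp by (intro Bochner_Integration.integral_cong) auto
    also have "\<dots> = (\<integral>g. (\<Sum>e\<in>E. Q u e * (\<phi> u g * \<phi> e g)) \<partial>\<mu>)"
      by (simp add: sum_distrib_left mult.assoc mult.left_commute)
    also have "\<dots> = (\<Sum>e\<in>E. Q u e * Q u e)"
      unfolding Q_def using int by (subst Bochner_Integration.integral_sum) auto
    finally show ?thesis by (simp add: power2_eq_square)
  qed
  define K where "K x = (\<Sum>e\<in>E. \<phi> e x * \<phi> e x)" for x
  have Knn: "K x \<ge> 0" for x unfolding K_def by (intro sum_nonneg) auto
  have CS: "(\<phi> u x)^2 \<le> Q u u * K x" if "u \<in> W" "x \<in> C" for u x
    using Cauchy_Schwarz_ineq_sum[of "\<lambda>e. Q u e" "\<lambda>e. \<phi> e x" E] expand[OF that] Qww[OF that(1)]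
    unfolding K_def by (simp add: power2_eq_square)
  have wx: "\<exists>u\<in>W. \<phi> u x = K x \<and> Q u u = K x" if x: "x \<in> C" for x
  proof (intro bexI conjI)
    define u where "u = (\<Sum>e\<in>E. \<phi> e x *\<^sub>R e)"
    show uW: "u \<in> W" unfolding u_def using sub EW by (intro subspace_sum subspace_scale) auto
    show "\<phi> u x = K x" unfolding u_def phisum K_def ..
    have Que: "Q u e' = \<phi> e' x" if "e' \<in> E" for e'
    proof -
      have "Q u e' = (\<Sum>e\<in>E. \<phi> e x * Q e e')" unfolding u_def Qsum[OF Efin] ..
      also have "\<dots> = (\<Sum>e\<in>E. if e = e' then \<phi> e x else 0)"
        using that Eon by (intro sum.cong) auto
      also have "\<dots> = \<phi> e' x" using that Efin by simp
      finally show ?thesis .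
    qed
    show "Q u u = K x" unfolding Qww[OF uW] K_def using Que by (simp add: power2_eq_square)
  qed
  have Kmono: "K (mult x y) \<le> K x" if x: "x \<in> C" and y: "y \<in> C" for x y
  proof -
    obtain u where u: "u \<in> W" "\<phi> u (mult x y) = K (mult x y)" "Q u u = K (mult x y)"
      using wx[OF mc[OF x y]] by blast
    have "Q (Tm y u) (Tm y u) = Q u u"
    proof -
      have "Q (Tm y u) (Tm y u) = (\<integral>g. \<phi> u (mult g y) * \<phi> u (mult g y) \<partial>\<mu>)"
        unfolding Q_def using Tphi[OF y] sp by (intro Bochner_Integration.integral_cong) auto
      then show ?thesis using inv[OF y] unfolding Q_def by simp
    qed
    moreover have "(\<phi> (Tm y u) x)^2 \<le> Q (Tm y u) (Tm y u) * K x" by (rule CS[OF Tw[OF y u(1)] x])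
    ultimately have "(K (mult x y))^2 \<le> K (mult x y) * K x" using u Tphi[OF y x] by simp
    then have "K (mult x y) * K (mult x y) \<le> K (mult x y) * K x" by (simp add: power2_eq_square)
    then show ?thesis using Knn[of "mult x y"] Knn[of x]
      by (cases "K (mult x y) = 0") (simp_all add: mult_le_cancel_left_pos)
  qed
  have Kx0: "K x0 \<le> K x" if "x \<in> C" for x
    using solv[OF that] Kmono[OF that] by blast
  have intK: "(\<integral>x. K x \<partial>\<mu>) = card E"
  proof -
    have "(\<integral>x. K x \<partial>\<mu>) = (\<Sum>e\<in>E. Q e e)"
      unfolding K_def Q_def using int by (subst Bochner_Integration.integral_sum) auto
    also have "\<dots> = (\<Sum>e\<in>E. 1)" using Eon by (intro sum.cong) auto
    finally show ?thesis by simp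
  qed
  have "K x0 = (\<integral>x. K x0 \<partial>\<mu>)" by (simp add: prob_space)
  also have "\<dots> \<le> (\<integral>x. K x \<partial>\<mu>)"
    using Kx0 sp int unfolding K_def by (intro integral_mono) auto
  finally have "K x0 \<le> dim W" using intK ON_card[OF E] by simp
  then have "Q w w * K x0 \<le> Q w w * dim W" using Qnn[of w] by (rule mult_left_mono)
  then have "(\<phi> w x0)^2 \<le> Q w w * dim W"
    using CS[OF w x0] by (rule order_trans[rotated])
  then show ?thesis unfolding Q_def by (simp add: mult.commute)
qed



lemma cg_group: "compact_group G \<Longrightarrow> group G" unfolding compact_group_def by simp

lemma R_cont:
  assumes cg: "compact_group G" and y: "y \<in> carrier G"
  shows "continuous_on (carrier G) (\<lambda>h. h \<otimes>\<^bsub>G\<^esub> y)"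
proof -
  have m: "continuous_on (carrier G \<times> carrier G) (\<lambda>(x, y). x \<otimes>\<^bsub>G\<^esub> y)"
    using cg unfolding compact_group_def by simp
  have p: "continuous_on (carrier G) (\<lambda>h. (h, y))" by (intro continuous_intros)
  have "(\<lambda>h. (h, y)) ` carrier G \<subseteq> carrier G \<times> carrier G" using y by auto
  from continuous_on_compose2[OF m p this] show ?thesis by simp
qed

lemma haar_meas:
  assumes hp: "haar_prob G \<mu>" and k: "continuous_on (carrier G) k"
  shows "k \<in> borel_measurable \<mu>"
proof -
  have s: "sets \<mu> = sets (restrict_space borel (carrier G))" using hp unfolding haar_prob_def by simp
  show ?thesis by (subst measurable_cong_sets[OF s refl]) (rule borel_measurable_continuous_on_restrict[OF k])
qed

lemma haar_int:
  fixes k :: "'g::topological_space \<Rightarrow> real"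
  assumes cg: "compact_group G" and hp: "haar_prob G \<mu>" and k: "continuous_on (carrier G) k"
  shows "integrable \<mu> k"
proof -
  interpret prob_space \<mu> using hp unfolding haar_prob_def by simp
  have sp: "space \<mu> = carrier G" using hp unfolding haar_prob_def by simp
  have "compact (carrier G)" using cg unfolding compact_group_def by simp
  then have "bounded (k ` carrier G)" by (intro compact_imp_bounded compact_continuous_image k)
  then obtain B where B: "\<And>x. x \<in> carrier G \<Longrightarrow> norm (k x) \<le> B" unfolding bounded_iff by auto
  show ?thesis
    by (rule integrable_const_bound[where B = B]) (use B sp haar_meas[OF hp k] in auto)
qed

lemma haar_distr:
  assumes cg: "compact_group G" and hp: "haar_prob G \<mu>" and y: "y \<in> carrier G"
  shows "(\<lambda>h. h \<otimes>\<^bsub>G\<^esub> y) \<in> measurable \<mu> \<mu>" and "distr \<mu> \<mu> (\<lambda>h. h \<otimes>\<^bsub>G\<^esub> y) = \<mu>"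
proof -
  interpret group G using cg_group[OF cg] .
  have s: "sets \<mu> = sets (restrict_space borel (carrier G))" and sp: "space \<mu> = carrier G"
    and hinv: "\<And>g A. g \<in> carrier G \<Longrightarrow> A \<in> sets \<mu> \<Longrightarrow> emeasure \<mu> ((\<lambda>h. h \<otimes>\<^bsub>G\<^esub> g) ` A) = emeasure \<mu> A"
    using hp unfolding haar_prob_def by auto
  have "(\<lambda>h. h \<otimes>\<^bsub>G\<^esub> y) \<in> measurable (restrict_space borel (carrier G)) (restrict_space borel (carrier G))"
    by (rule measurable_restrict_space2) (use y borel_measurable_continuous_on_restrict[OF R_cont[OF cg y]] in \<open>auto simp: space_restrict_space\<close>)
  then show M: "(\<lambda>h. h \<otimes>\<^bsub>G\<^esub> y) \<in> measurable \<mu> \<mu>" using measurable_cong_sets[OF s s] by simp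
  show "distr \<mu> \<mu> (\<lambda>h. h \<otimes>\<^bsub>G\<^esub> y) = \<mu>"
  proof (rule measure_eqI)
    show "sets (distr \<mu> \<mu> (\<lambda>h. h \<otimes>\<^bsub>G\<^esub> y)) = sets \<mu>" by simp
    fix A assume "A \<in> sets (distr \<mu> \<mu> (\<lambda>h. h \<otimes>\<^bsub>G\<^esub> y))"
    then have A: "A \<in> sets \<mu>" by simp
    then have AC: "A \<subseteq> carrier G" using sets.sets_into_space sp by blast
    have "(\<lambda>h. h \<otimes>\<^bsub>G\<^esub> y) -` A \<inter> space \<mu> = (\<lambda>h. h \<otimes>\<^bsub>G\<^esub> inv\<^bsub>G\<^esub> y) ` A"
    proof (intro equalityI subsetI)
      fix z assume z: "z \<in> (\<lambda>h. h \<otimes>\<^bsub>G\<^esub> y) -` A \<inter> space \<mu>"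
      then have zC: "z \<in> carrier G" using sp by simp
      have "z = (z \<otimes>\<^bsub>G\<^esub> y) \<otimes>\<^bsub>G\<^esub> inv\<^bsub>G\<^esub> y" using zC y by (simp add: m_assoc)
      then show "z \<in> (\<lambda>h. h \<otimes>\<^bsub>G\<^esub> inv\<^bsub>G\<^esub> y) ` A" using z by blast
    next
      fix z assume "z \<in> (\<lambda>h. h \<otimes>\<^bsub>G\<^esub> inv\<^bsub>G\<^esub> y) ` A"
      then obtain a where a: "a \<in> A" "z = a \<otimes>\<^bsub>G\<^esub> inv\<^bsub>G\<^esub> y" by blast
      have aC: "a \<in> carrier G" using a AC by blast
      have "z \<otimes>\<^bsub>G\<^esub> y = a" using a aC y by (simp add: m_assoc)
      then show "z \<in> (\<lambda>h. h \<otimes>\<^bsub>G\<^esub> y) -` A \<inter> space \<mu>" using a aC y sp by auto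
    qed
    then show "emeasure (distr \<mu> \<mu> (\<lambda>h. h \<otimes>\<^bsub>G\<^esub> y)) A = emeasure \<mu> A"
      using emeasure_distr[OF M A] hinv[OF inv_closed[OF y] A] by simp
  qed
qed

lemma haar_right_inv:
  fixes k :: "'g::topological_space \<Rightarrow> real"
  assumes cg: "compact_group G" and hp: "haar_prob G \<mu>" and y: "y \<in> carrier G"
    and k: "k \<in> borel_measurable \<mu>"
  shows "(\<integral>g. k (g \<otimes>\<^bsub>G\<^esub> y) \<partial>\<mu>) = (\<integral>g. k g \<partial>\<mu>)"
  using integral_distr[OF haar_distr(1)[OF cg hp y] k] haar_distr(2)[OF cg hp y] by simp

lemma full_support:
  fixes h :: "'g::topological_space \<Rightarrow> real"
  assumes cg: "compact_group G" and hp: "haar_prob G \<mu>" and hc: "continuous_on (carrier G) h"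
    and nn: "\<And>x. x \<in> carrier G \<Longrightarrow> h x \<ge> 0" and z: "(\<integral>g. h g \<partial>\<mu>) = 0" and x: "x \<in> carrier G"
  shows "h x = 0"
proof (rule ccontr)
  assume "h x \<noteq> 0"
  then have hx: "h x > 0" using nn[OF x] by simp
  interpret group G using cg_group[OF cg] .
  interpret prob_space \<mu> using hp unfolding haar_prob_def by simp
  have sp: "space \<mu> = carrier G" using hp unfolding haar_prob_def by simp
  have cpt: "compact (carrier G)" using cg unfolding compact_group_def by simp
  define a where "a = h x / 2"
  define U where "U = {g \<in> space \<mu>. a < h g}"
  have hm: "h \<in> borel_measurable \<mu>" by (rule haar_meas[OF hp hc])
  have Um: "U \<in> sets \<mu>" unfolding U_def using hm by measurable
  have "measure \<mu> U = 0"
  proof -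
    have iU: "integrable \<mu> (\<lambda>g. a * indicator U g)"
      using Um by (intro integrable_mult_right integrable_real_indicator) (auto simp: less_top[symmetric])
    have "(\<integral>g. a * indicator U g \<partial>\<mu>) \<le> (\<integral>g. h g \<partial>\<mu>)"
    proof (rule integral_mono[OF iU haar_int[OF cg hp hc]])
      fix g assume g: "g \<in> space \<mu>"
      show "a * indicator U g \<le> h g"
        using nn[of g] g sp hx unfolding U_def a_def by (auto simp: indicator_def)
    qed
    then have "a * measure \<mu> U \<le> 0" using z Um by simp
    moreover have "measure \<mu> U \<ge> 0" by simp
    ultimately show ?thesis using hx unfolding a_def by (simp add: mult_le_0_iff)
  qed
  have "\<forall>c\<in>carrier G. \<exists>A. open A \<and> A \<inter> carrier G = (\<lambda>g. h (g \<otimes>\<^bsub>G\<^esub> inv\<^bsub>G\<^esub> c)) -` {a<..} \<inter> carrier G"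
  proof
    fix c assume c: "c \<in> carrier G"
    have "continuous_on (carrier G) (\<lambda>g. h (g \<otimes>\<^bsub>G\<^esub> inv\<^bsub>G\<^esub> c))"
      by (rule continuous_on_compose2[OF hc R_cont[OF cg inv_closed[OF c]]]) (use c in auto)
    then show "\<exists>A. open A \<and> A \<inter> carrier G = (\<lambda>g. h (g \<otimes>\<^bsub>G\<^esub> inv\<^bsub>G\<^esub> c)) -` {a<..} \<inter> carrier G"
      unfolding continuous_on_open_invariant by auto
  qed
  then obtain OA where OA: "\<And>c. c \<in> carrier G \<Longrightarrow> open (OA c)"
    "\<And>c. c \<in> carrier G \<Longrightarrow> OA c \<inter> carrier G = (\<lambda>g. h (g \<otimes>\<^bsub>G\<^esub> inv\<^bsub>G\<^esub> c)) -` {a<..} \<inter> carrier G"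
    by metis
  have cover: "carrier G \<subseteq> (\<Union>c\<in>carrier G. OA c)"
  proof
    fix zz assume zz: "zz \<in> carrier G"
    define c where "c = inv\<^bsub>G\<^esub> x \<otimes>\<^bsub>G\<^esub> zz"
    have c: "c \<in> carrier G" using zz x unfolding c_def by simp
    have "zz \<otimes>\<^bsub>G\<^esub> inv\<^bsub>G\<^esub> c = x" unfolding c_def using zz x
      by (simp add: inv_mult_group m_assoc[symmetric])
    then have "zz \<in> OA c \<inter> carrier G" using OA(2)[OF c] zz hx unfolding a_def by simp
    then show "zz \<in> (\<Union>c\<in>carrier G. OA c)" using c by blast
  qed
  obtain K where K: "K \<subseteq> carrier G" "finite K" "carrier G \<subseteq> (\<Union>c\<in>K. OA c)"
    using compactE_image[OF cpt, of "carrier G" OA] OA(1) cover by blast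
  have pre: "OA c \<inter> carrier G = (\<lambda>g. g \<otimes>\<^bsub>G\<^esub> inv\<^bsub>G\<^esub> c) -` U \<inter> space \<mu>" if c: "c \<in> carrier G" for c
    using OA(2)[OF c] c sp unfolding U_def by auto
  have mc: "measure \<mu> (OA c \<inter> carrier G) = 0" if c: "c \<in> carrier G" for c
  proof -
    have "emeasure \<mu> (OA c \<inter> carrier G) = emeasure (distr \<mu> \<mu> (\<lambda>g. g \<otimes>\<^bsub>G\<^esub> inv\<^bsub>G\<^esub> c)) U"
      unfolding pre[OF c] by (rule emeasure_distr[symmetric, OF haar_distr(1)[OF cg hp inv_closed[OF c]] Um])
    also have "\<dots> = emeasure \<mu> U" using haar_distr(2)[OF cg hp inv_closed[OF c]] by simp
    finally show ?thesis using \<open>measure \<mu> U = 0\<close> unfolding measure_def by simp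
  qed
  have sets: "OA c \<inter> carrier G \<in> sets \<mu>" if c: "c \<in> carrier G" for c
    unfolding pre[OF c] using haar_distr(1)[OF cg hp inv_closed[OF c]] Um by (rule measurable_sets)
  have "1 = measure \<mu> (carrier G)" using prob_space sp by simp
  also have "carrier G = (\<Union>c\<in>K. OA c \<inter> carrier G)" using K by blast
  also have "measure \<mu> \<dots> \<le> (\<Sum>c\<in>K. measure \<mu> (OA c \<inter> carrier G))"
    using K sets by (intro measure_UNION_le) auto
  also have "\<dots> = 0" using K mc by (intro sum.neutral) auto
  finally show False by simp
qed



theorem corollary1p4:
  fixes G :: "('g::topological_space, 'b) monoid_scheme"
    and \<mu> :: "'g measure"
    and \<rho> :: "'g \<Rightarrow> real^'n^'n"
    and v :: "real^'n"
    and l :: "real^'n \<Rightarrow> real"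
    and f :: "'g \<Rightarrow> real"
    and D :: nat
  assumes "compact_group G"
    and "haar_prob G \<mu>"
    and "continuous_linear_action G \<rho>"
    and "linear l"
    and "\<And>g. f g = l (\<rho> g *v v)"
    and "D = dim (span ((\<lambda>g. tensor_act (\<rho> g) (tensor_pow v :: real^('n^'k))) ` carrier G))"
  shows "Lp_norm_even \<mu> (2 * CARD('k)) f \<le> sup_norm G f
       \<and> sup_norm G f \<le> real D powr (1 / (2 * CARD('k))) * Lp_norm_even \<mu> (2 * CARD('k)) f"
proof -
  note cg = assms(1) and hp = assms(2)
  interpret group G using cg_group[OF cg] .
  interpret prob_space \<mu> using hp unfolding haar_prob_def by simp
  have sp: "space \<mu> = carrier G" using hp unfolding haar_prob_def by simp
  have cpt: "compact (carrier G)" using cg unfolding compact_group_def by simp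
  have rho1: "\<rho> \<one>\<^bsub>G\<^esub> = mat 1" and rhom: "\<And>g h. g \<in> carrier G \<Longrightarrow> h \<in> carrier G \<Longrightarrow> \<rho> (g \<otimes>\<^bsub>G\<^esub> h) = \<rho> g ** \<rho> h"
    and rhoc: "continuous_on (carrier G) \<rho>"
    using assms(3) unfolding continuous_linear_action_def by auto
  define k where "k = CARD('k)"
  define c where "c i = l (axis i 1)" for i
  define L where "L t = (\<Sum>\<sigma>\<in>UNIV. (\<Prod>j\<in>UNIV. c (\<sigma> $ j)) * t $ \<sigma>)" for t :: "real^('n^'k)"
  define \<phi> where "\<phi> w g = L (tensor_act (\<rho> g) w)" for w g
  define w0 where "w0 = (tensor_pow v :: real^('n^'k))"
  define S where "S = (\<lambda>g. tensor_act (\<rho> g) w0) ` carrier G"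
  define W where "W = span S"
  have D: "D = dim W" using assms(6) unfolding W_def S_def w0_def .
  have lfor: "l u = (\<Sum>i\<in>UNIV. u $ i * c i)" for u
  proof -
    have "l u = l (\<Sum>i\<in>UNIV. u $ i *\<^sub>R axis i 1)"
      using basis_expansion[of u] by (simp add: scalar_mult_eq_scaleR)
    also have "\<dots> = (\<Sum>i\<in>UNIV. u $ i * c i)"
      unfolding c_def by (subst linear_sum[OF assms(4)]) (simp add: linear_scale[OF assms(4)] comp_def)
    finally show ?thesis .
  qed
  have Lpow: "L (tensor_pow u) = (l u) ^ k" for u
  proof -
    have "(l u) ^ k = (\<Prod>j\<in>(UNIV::'k set). \<Sum>i\<in>UNIV. u $ i * c i)" unfolding k_def lfor by simp
    also have "\<dots> = (\<Sum>\<sigma>\<in>(UNIV::('n^'k) set). \<Prod>j\<in>UNIV. u $ (\<sigma> $ j) * c (\<sigma> $ j))"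
      by (rule sum_vec_prod[symmetric])
    also have "\<dots> = L (tensor_pow u)" unfolding L_def tensor_pow_def
      by (simp add: prod.distrib mult.commute)
    finally show ?thesis ..
  qed
  have phiw0: "\<phi> w0 g = (f g) ^ k" for g
    unfolding \<phi>_def w0_def tensor_act_pow Lpow assms(5) ..
  have Llin: "linear L" unfolding L_def
    by (intro linearI) (simp_all add: sum.distrib algebra_simps sum_distrib_left)
  have lin: "linear (\<lambda>w. \<phi> w g)" for g
    using linear_compose[OF tensor_act_linear Llin] unfolding \<phi>_def comp_def .
  have rc: "continuous_on (carrier G) (\<lambda>g. \<rho> g $ i $ j)" for i j
    by (intro continuous_on_component rhoc)
  have phic: "continuous_on (carrier G) (\<phi> w)" for w
  proof -
    have eq: "\<phi> w = (\<lambda>g. \<Sum>\<sigma>\<in>UNIV. (\<Prod>j\<in>UNIV. c (\<sigma> $ j)) * (\<Sum>\<tau>\<in>UNIV. (\<Prod>j\<in>UNIV. \<rho> g $ (\<sigma> $ j) $ (\<tau> $ j)) * w $ \<tau>))" (is "_ = (\<lambda>x. ?rhs x)")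
      unfolding \<phi>_def L_def tensor_act_def by (simp add: fun_eq_iff)
    have "continuous_on (carrier G) (\<lambda>x. ?rhs x)"
      by (intro continuous_intros rc)
    then show ?thesis by (simp only: eq)
  qed
  have fc: "continuous_on (carrier G) f"
  proof -
    have eq: "f = (\<lambda>g. \<Sum>i\<in>UNIV. (\<Sum>j\<in>UNIV. \<rho> g $ i $ j * v $ j) * c i)" (is "_ = (\<lambda>x. ?rhs x)")
      unfolding assms(5) lfor by (simp add: fun_eq_iff matrix_vector_mult_def)
    have "continuous_on (carrier G) (\<lambda>x. ?rhs x)"
      by (intro continuous_intros rc)
    then show ?thesis by (simp only: eq)
  qed
  have ppc: "continuous_on (carrier G) (\<lambda>g. \<phi> u g * \<phi> w g)" for u w
    by (intro continuous_intros phic)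
  have int: "integrable \<mu> (\<lambda>g. \<phi> u g * \<phi> w g)" for u w
    by (rule haar_int[OF cg hp ppc])
  have fs: "\<phi> w x = 0" if "(\<integral>g. \<phi> w g * \<phi> w g \<partial>\<mu>) = 0" "x \<in> carrier G" for w x
    using full_support[OF cg hp ppc[of w w] _ that] by simp
  have Tw: "tensor_act (\<rho> y) w \<in> W" if y: "y \<in> carrier G" and w: "w \<in> W" for y w
  proof -
    have "tensor_act (\<rho> y) ` S \<subseteq> S"
    proof
      fix z assume "z \<in> tensor_act (\<rho> y) ` S"
      then obtain g where g: "g \<in> carrier G" "z = tensor_act (\<rho> y) (tensor_act (\<rho> g) w0)"
        unfolding S_def by blast
      then have "z = tensor_act (\<rho> (y \<otimes>\<^bsub>G\<^esub> g)) w0" using y by (simp add: tensor_act_mult rhom)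
      then show "z \<in> S" unfolding S_def using g y by blast
    qed
    then have "span (tensor_act (\<rho> y) ` S) \<subseteq> W" unfolding W_def by (rule span_mono)
    then have "tensor_act (\<rho> y) ` W \<subseteq> W"
      unfolding W_def span_linear_image[OF tensor_act_linear] .
    then show ?thesis using w by blast
  qed
  have Tphi: "\<phi> (tensor_act (\<rho> y) w) g = \<phi> w (g \<otimes>\<^bsub>G\<^esub> y)" if "y \<in> carrier G" "g \<in> carrier G" for y w g
    unfolding \<phi>_def using that by (simp add: tensor_act_mult rhom)
  have inv: "(\<integral>g. \<phi> w (g \<otimes>\<^bsub>G\<^esub> y) * \<phi> w (g \<otimes>\<^bsub>G\<^esub> y) \<partial>\<mu>) = (\<integral>g. \<phi> w g * \<phi> w g \<partial>\<mu>)"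
    if "y \<in> carrier G" for y w
    using haar_right_inv[OF cg hp that haar_meas[OF hp ppc[of w w]]] .
  have afc: "continuous_on (carrier G) (\<lambda>g. \<bar>f g\<bar>)" by (intro continuous_intros fc)
  obtain x0 where x0: "x0 \<in> carrier G" and x0max: "\<And>y. y \<in> carrier G \<Longrightarrow> \<bar>f y\<bar> \<le> \<bar>f x0\<bar>"
    using continuous_attains_sup[OF cpt _ afc] one_closed by blast
  have solv: "\<exists>y\<in>carrier G. x \<otimes>\<^bsub>G\<^esub> y = x0" if x: "x \<in> carrier G" for x
    using x x0 by (intro bexI[of _ "inv\<^bsub>G\<^esub> x \<otimes>\<^bsub>G\<^esub> x0"]) (simp_all add: m_assoc[symmetric])
  have w0W: "w0 \<in> W"
  proof -
    have "tensor_act (\<rho> \<one>\<^bsub>G\<^esub>) w0 = w0" unfolding rho1 w0_def tensor_act_pow by simp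
    then have "w0 \<in> S" unfolding S_def using one_closed by force
    then show ?thesis unfolding W_def by (rule span_base)
  qed
  have key: "(\<phi> w0 x0)^2 \<le> dim W * (\<integral>g. \<phi> w0 g * \<phi> w0 g \<partial>\<mu>)"
    by (rule core[where Tm = "\<lambda>y w. tensor_act (\<rho> y) w" and mult = "\<lambda>a b. a \<otimes>\<^bsub>G\<^esub> b" and C = "carrier G",
          OF prob_space_axioms sp int lin fs _ Tw Tphi inv m_closed solv x0 w0W])
       (auto simp: W_def)
  define M where "M = \<bar>f x0\<bar>"
  define p where "p = 2 * k"
  define I where "I = (\<integral>g. (f g) ^ p \<partial>\<mu>)"
  have kpos: "k > 0" unfolding k_def by simp
  have ppos: "p > 0" unfolding p_def using kpos by simp
  have evp: "even p" unfolding p_def by simp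
  have sup: "sup_norm G f = M" unfolding sup_norm_def M_def
    by (rule cSup_eq_maximum) (use x0 x0max in auto)
  have Mnn: "M \<ge> 0" unfolding M_def by simp
  have Inn: "I \<ge> 0" unfolding I_def using evp by (intro integral_nonneg_AE) (simp add: zero_le_even_power)
  have fpint: "integrable \<mu> (\<lambda>g. (f g) ^ p)" by (intro haar_int[OF cg hp] continuous_intros fc)
  have A: "I \<le> M ^ p"
  proof -
    have "I \<le> (\<integral>g. M ^ p \<partial>\<mu>)" unfolding I_def
    proof (rule integral_mono[OF fpint])
      fix g assume "g \<in> space \<mu>"
      then have "\<bar>f g\<bar> \<le> M" using x0max sp unfolding M_def by simp
      then have "\<bar>f g\<bar> ^ p \<le> M ^ p" by (intro power_mono) auto
      then show "(f g) ^ p \<le> M ^ p" using power_even_abs[OF evp] by metis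
    qed simp
    then show ?thesis by (simp add: prob_space)
  qed
  have B: "M ^ p \<le> D * I"
  proof -
    have "M ^ p = (\<phi> w0 x0)^2" unfolding phiw0 M_def p_def power_even_abs[OF evp[unfolded p_def]]
      by (simp add: power_mult[symmetric] mult.commute)
    moreover have "(\<integral>g. \<phi> w0 g * \<phi> w0 g \<partial>\<mu>) = I" unfolding I_def phiw0 p_def
      by (simp add: power_add[symmetric] mult_2)
    ultimately show ?thesis using key D by simp
  qed
  have R: "(M ^ p) powr (1 / real p) = M"
  proof (cases "M = 0")
    case True then show ?thesis using ppos by simp
  next
    case False
    then have "M > 0" using Mnn by simp
    then show ?thesis using ppos by (simp add: powr_realpow[symmetric] powr_powr)
  qed
  have "I powr (1 / real p) \<le> (M ^ p) powr (1 / real p)"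
    by (rule powr_mono2) (use Inn A in auto)
  then have 1: "I powr (1 / real p) \<le> M" using R by simp
  have "M \<le> (D * I) powr (1 / real p)" using powr_mono2[of "1 / real p" "M ^ p" "D * I"] B Inn R Mnn by simp
  also have "\<dots> = real D powr (1 / real p) * I powr (1 / real p)" using Inn by (simp add: powr_mult)
  finally have 2: "M \<le> real D powr (1 / real p) * I powr (1 / real p)" .
  show ?thesis using 1 2 unfolding Lp_norm_even_def sup I_def p_def k_def by simp
qed

end
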